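(* For any finite graph $G$ with at least one edge, the family $\mathcal{C}(G)$ has Helly number $2$.
   Context: Let $X=\mathrm{MIS}(G)$ be the set of maximal independent sets of $G$; for $S\subseteq V(G)$ let $K_S=\{I\in X: S\subseteq I\}$; $\mathcal{C}(G)=\{K_S: S\subseteq V(G)\}$. The Helly number of a set system $\mathcal{F}$ is the minimum integer $h$ such that for every finite subfamily $\mathcal{G}\subseteq\mathcal{F}$, if every $h$ members of $\mathcal{G}$ have a common point, then all members of $\mathcal{G}$ have a common point. *)

theory Defs
  imports Main
begin

definition simple_graph :: "'a set \<Rightarrow> ('a \<Rightarrow> 'a \<Rightarrow> bool) \<Rightarrow> bool" where
  "simple_graph V E \<longleftrightarrow>
     (\<forall>u v. E u v \<longrightarrow> u \<in> V \<and> v \<in> V) \<and>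
     (\<forall>u v. E u v \<longrightarrow> E v u) \<and> (\<forall>u. \<not> E u u)"

definition independent :: "'a set \<Rightarrow> ('a \<Rightarrow> 'a \<Rightarrow> bool) \<Rightarrow> 'a set \<Rightarrow> bool" where
  "independent V E I \<longleftrightarrow> I \<subseteq> V \<and> (\<forall>u\<in>I. \<forall>v\<in>I. \<not> E u v)"

definition MIS :: "'a set \<Rightarrow> ('a \<Rightarrow> 'a \<Rightarrow> bool) \<Rightarrow> 'a set set" where
  "MIS V E = {I. independent V E I \<and> (\<forall>J. independent V E J \<and> I \<subseteq> J \<longrightarrow> J = I)}"

definition K_set :: "'a set \<Rightarrow> ('a \<Rightarrow> 'a \<Rightarrow> bool) \<Rightarrow> 'a set \<Rightarrow> 'a set set" where
  "K_set V E S = {I \<in> MIS V E. S \<subseteq> I}"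

definition C_fam :: "'a set \<Rightarrow> ('a \<Rightarrow> 'a \<Rightarrow> bool) \<Rightarrow> 'a set set set" where
  "C_fam V E = {K_set V E S | S. S \<subseteq> V}"

definition helly_prop :: "'b set \<Rightarrow> 'b set set \<Rightarrow> nat \<Rightarrow> bool" where
  "helly_prop X F h \<longleftrightarrow>
     (\<forall>G. G \<subseteq> F \<and> finite G \<longrightarrow>
        (\<forall>H. H \<subseteq> G \<and> card H \<le> h \<longrightarrow> (\<exists>x\<in>X. \<forall>A\<in>H. x \<in> A)) \<longrightarrow>
        (\<exists>x\<in>X. \<forall>A\<in>G. x \<in> A))"

definition helly_number :: "'b set \<Rightarrow> 'b set set \<Rightarrow> nat" where
  "helly_number X F = (LEAST h. helly_prop X F h)"

end

theory Submission
  imports Defs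
begin

lemma extend_MIS:
  assumes "finite V" "independent V E S"
  shows "\<exists>I\<in>MIS V E. S \<subseteq> I"
proof -
  let ?A = "{J. independent V E J \<and> S \<subseteq> J}"
  have fin: "finite ?A"
    by (rule finite_subset[of _ "Pow V"]) (auto simp: independent_def assms(1))
  have ne: "?A \<noteq> {}" using assms(2) by auto
  obtain m where m: "m \<in> ?A" "\<forall>b\<in>?A. m \<le> b \<longrightarrow> m = b"
    using finite_has_maximal[OF fin ne] by blast
  have "m \<in> MIS V E"
    unfolding MIS_def using m by auto
  then show ?thesis using m by blast
qed

lemma helly2:
  assumes "finite V"
  shows "helly_prop (MIS V E) (C_fam V E) 2"
  unfolding helly_prop_def
proof (intro allI impI)
  fix G assume G: "G \<subseteq> C_fam V E \<and> finite G"
  assume H: "\<forall>H. H \<subseteq> G \<and> card H \<le> 2 \<longrightarrow> (\<exists>x\<in>MIS V E. \<forall>A\<in>H. x \<in> A)"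
  have "\<forall>A\<in>G. \<exists>S. S \<subseteq> V \<and> A = K_set V E S" using G unfolding C_fam_def by blast
  then obtain f where f: "\<And>A. A \<in> G \<Longrightarrow> f A \<subseteq> V \<and> A = K_set V E (f A)"
    by (rule bchoice[elim_format]) blast
  let ?S = "\<Union>A\<in>G. f A"
  have SV: "?S \<subseteq> V" using f by blast
  have nE: "\<not> E u v" if u: "u \<in> ?S" and v: "v \<in> ?S" for u v
  proof -
    obtain A where A: "A \<in> G" "u \<in> f A" using u by blast
    obtain B where B: "B \<in> G" "v \<in> f B" using v by blast
    have c: "card {A, B} \<le> 2" by (simp add: card_insert_if)
    have sub: "{A, B} \<subseteq> G" using A B by blast
    have "\<exists>x\<in>MIS V E. \<forall>C\<in>{A,B}. x \<in> C" using H[rule_format, of "{A,B}"] c sub by blast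
    then obtain x where x: "x \<in> MIS V E" "\<forall>C\<in>{A,B}. x \<in> C" by blast
    have "x \<in> K_set V E (f A)" using x(2) f[OF A(1)] by simp
    then have "u \<in> x" using A(2) unfolding K_set_def by blast
    have "x \<in> K_set V E (f B)" using x(2) f[OF B(1)] by simp
    then have "v \<in> x" using B(2) unfolding K_set_def by blast
    have "independent V E x" using x(1) unfolding MIS_def by blast
    then show "\<not> E u v" using \<open>u \<in> x\<close> \<open>v \<in> x\<close> unfolding independent_def by blast
  qed
  have ind: "independent V E ?S"
    unfolding independent_def using SV nE by blast
  obtain I where I: "I \<in> MIS V E" "?S \<subseteq> I" using extend_MIS[OF assms ind] by blast
  have "\<forall>A\<in>G. I \<in> A"
  proof
    fix A assume A: "A \<in> G"
    have "f A \<subseteq> I" using A I(2) by blast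
    then have "I \<in> K_set V E (f A)" using I(1) unfolding K_set_def by blast
    then show "I \<in> A" using f[OF A] by simp
  qed
  then show "\<exists>x\<in>MIS V E. \<forall>A\<in>G. x \<in> A" using I by blast
qed

lemma card_le1_cases:
  assumes "finite H" "card H \<le> 1"
  shows "H = {} \<or> (\<exists>A. H = {A})"
proof (cases "H = {}")
  case False
  then have "card H = 1" using assms card_0_eq by fastforce
  then show ?thesis using card_1_singletonE by metis
qed simp

lemma not_helly1:
  assumes "finite V" "simple_graph V E" "E u v" "h \<le> 1"
  shows "\<not> helly_prop (MIS V E) (C_fam V E) h"
proof
  assume hp: "helly_prop (MIS V E) (C_fam V E) h"
  have uv: "u \<in> V" "v \<in> V" using assms(2,3) unfolding simple_graph_def by blast+
  have nE: "\<And>w. \<not> E w w" using assms(2) unfolding simple_graph_def by blast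
  have iu: "independent V E {u}" "independent V E {v}" "independent V E {}"
    using uv nE unfolding independent_def by auto
  let ?G = "{K_set V E {u}, K_set V E {v}}"
  have m1: "K_set V E {u} \<in> C_fam V E" unfolding C_fam_def using uv(1) by blast
  have m2: "K_set V E {v} \<in> C_fam V E" unfolding C_fam_def using uv(2) by blast
  have G: "?G \<subseteq> C_fam V E \<and> finite ?G" using m1 m2 by simp
  obtain I0 where I0: "I0 \<in> MIS V E" using extend_MIS[OF assms(1) iu(3)] by blast
  obtain Iu where Iu: "Iu \<in> K_set V E {u}" using extend_MIS[OF assms(1) iu(1)]
    unfolding K_set_def by blast
  obtain Iv where Iv: "Iv \<in> K_set V E {v}" using extend_MIS[OF assms(1) iu(2)]
    unfolding K_set_def by blast
  have hyp: "\<forall>H. H \<subseteq> ?G \<and> card H \<le> h \<longrightarrow> (\<exists>x\<in>MIS V E. \<forall>A\<in>H. x \<in> A)"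
  proof (intro allI impI)
    fix H assume H: "H \<subseteq> ?G \<and> card H \<le> h"
    have fH: "finite H" using H G finite_subset by metis
    have "card H \<le> 1" using H assms(4) by linarith
    then have "H = {} \<or> (\<exists>A. H = {A})" using card_le1_cases[OF fH] by blast
    then show "\<exists>x\<in>MIS V E. \<forall>A\<in>H. x \<in> A"
    proof
      assume "H = {}" then show ?thesis using I0 by blast
    next
      assume "\<exists>A. H = {A}"
      then obtain A where A: "H = {A}" by blast
      have "A \<in> ?G" using A H by simp
      then have "A = K_set V E {u} \<or> A = K_set V E {v}" by simp
      have "Iu \<in> MIS V E" "Iv \<in> MIS V E" using Iu Iv unfolding K_set_def by simp_all
      from \<open>A = K_set V E {u} \<or> A = K_set V E {v}\<close> show ?thesis
      proof
        assume "A = K_set V E {u}" then show ?thesis using A Iu \<open>Iu \<in> MIS V E\<close> by auto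
      next
        assume "A = K_set V E {v}" then show ?thesis using A Iv \<open>Iv \<in> MIS V E\<close> by auto
      qed
    qed
  qed
  have ex: "\<exists>x\<in>MIS V E. \<forall>A\<in>?G. x \<in> A"
    using hp[unfolded helly_prop_def, rule_format, OF G hyp[rule_format]] .
  obtain x where x: "x \<in> MIS V E" "\<forall>A\<in>?G. x \<in> A"
    using ex by blast
  then have "x \<in> K_set V E {u}" "x \<in> K_set V E {v}" by blast+
  then have "u \<in> x" "v \<in> x" unfolding K_set_def by blast+
  have "independent V E x" using x(1) unfolding MIS_def by blast
  then have "\<not> E u v" using \<open>u \<in> x\<close> \<open>v \<in> x\<close> unfolding independent_def by blast
  then show False using assms(3) by blast
qed

theorem proposition2p10:
  fixes V :: "'a set" and E :: "'a \<Rightarrow> 'a \<Rightarrow> bool"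
  assumes "finite V" and "simple_graph V E"
    and "\<exists>u v. E u v"
  shows "helly_number (MIS V E) (C_fam V E) = 2"
proof -
  obtain u v where e: "E u v" using assms(3) by blast
  show ?thesis
    unfolding helly_number_def
  proof (rule Least_equality)
    show "helly_prop (MIS V E) (C_fam V E) 2" using helly2[OF assms(1)] .
  next
    fix y assume "helly_prop (MIS V E) (C_fam V E) y"
    then show "2 \<le> y" using not_helly1[OF assms(1,2) e, of y] by linarith
  qed
qed

end
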